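(* Let $p$ be an odd prime. Then $$\sum_{t=0}^{(p-1)/2}(-1)^t\left[\binom{\frac{p-1}{2}+t}{t}-\binom{p+\frac{p-1}{2}+t}{p+t}\right]\binom{-\frac12}{t}^2\equiv0\pmod{p^2}.$$
   Context: For a rational number $x$ and integer $t\ge0$, $\binom{x}{t}=\frac{x(x-1)\cdots(x-t+1)}{t!}$; in particular $\binom{-1/2}{t}$ is a rational number whose denominator is a power of $2$. For rationals $a,b$ whose denominators are prime to $p$, $a\equiv b\pmod{p^k}$ means that $(a-b)/p^k$ is a rational number with denominator prime to $p$. *)

theory Defs
  imports Complex_Main "HOL-Computational_Algebra.Primes"
begin

definition rat_cong_pow :: "rat \<Rightarrow> rat \<Rightarrow> nat \<Rightarrow> nat \<Rightarrow> bool" where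
  "rat_cong_pow a b p k \<longleftrightarrow>
     coprime (snd (quotient_of ((a - b) / of_nat (p ^ k)))) (int p)"

end

theory Submission
  imports Defs "HOL-Number_Theory.Number_Theory"
begin

lemma central_step: "Suc t * (2 * Suc t choose Suc t) = 2 * (2*t+1) * (2*t choose t)"
proof -
  have a: "Suc t * (Suc (2*t+1) choose Suc t) = Suc (2*t+1) * ((2*t+1) choose t)"
    by (rule Suc_times_binomial)
  have b: "((2*t+1) - t) * ((2*t+1) choose t) = (2*t+1) * (((2*t+1) - 1) choose t)"
    by (rule binomial_absorb_comp)
  have b': "Suc t * ((2*t+1) choose t) = (2*t+1) * (2*t choose t)" using b
    by (simp add: Suc_diff_le)
  have "Suc t * (Suc t * (2 * Suc t choose Suc t)) = Suc t * (2 * (2*t+1) * (2*t choose t))"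
  proof -
    have e: "2 * Suc t = Suc (2*t+1)" by simp
    have "Suc t * (Suc t * (2 * Suc t choose Suc t)) = Suc t * (Suc (2*t+1) * ((2*t+1) choose t))"
      unfolding e a by (rule refl)
    also have "\<dots> = (2*t+2) * (Suc t * ((2*t+1) choose t))" by (simp only: mult_ac, simp)
    also have "\<dots> = (2*t+2) * ((2*t+1) * (2*t choose t))" by (simp only: b')
    also have "\<dots> = Suc t * (2 * (2*t+1) * (2*t choose t))"
    proof -
      have "\<And>X::nat. (2*t+2)*((2*t+1)*X) = Suc t*(2*(2*t+1)*X)" by (simp add: algebra_simps)
      then show ?thesis .
    qed
    finally show ?thesis .
  qed
  then show ?thesis by (metis mult_left_cancel nat.distinct(1))
qed

lemma gb_half: "((-1/2::rat) gchoose t) = (-1)^t * of_nat (2*t choose t) / 4^t"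
proof (induction t)
  case 0
  then show ?case by simp
next
  case (Suc t)
  have r: "fact (Suc t) * ((-1/2::rat) gchoose Suc t) = (-1/2 - of_nat t) * (fact t * ((-1/2::rat) gchoose t))"
  proof -
    have "fact (Suc t) * ((-1/2::rat) gchoose Suc t) = (\<Prod>i = 0..<Suc t. (-1/2::rat) - of_nat i)"
      by (rule gbinomial_mult_fact)
    also have "\<dots> = (\<Prod>i = 0..<t. (-1/2::rat) - of_nat i) * (-1/2 - of_nat t)"
      by (simp add: prod.atLeast0_lessThan_Suc)
    also have "\<dots> = (-1/2 - of_nat t) * (fact t * ((-1/2::rat) gchoose t))"
      by (simp add: gbinomial_mult_fact)
    finally show ?thesis .
  qed
  define C1 where "C1 = rat_of_nat (2 * Suc t choose Suc t)"
  define C0 where "C0 = rat_of_nat (2 * t choose t)"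
  define G1 where "G1 = ((-1/2::rat) gchoose Suc t)"
  define G0 where "G0 = ((-1/2::rat) gchoose t)"
  have c: "rat_of_nat (Suc t) * C1 = 2 * (2*of_nat t+1) * C0"
    unfolding C1_def C0_def using arg_cong[OF central_step[of t], of rat_of_nat]
    by (simp only: of_nat_mult of_nat_add of_nat_numeral of_nat_1)
  have IH: "G0 = (-1)^t * C0 / 4^t" using Suc unfolding G0_def C0_def .
  have "rat_of_nat (Suc t) * G1 = (-1/2 - of_nat t) * G0"
    unfolding G1_def G0_def
  proof -
    have "fact t * (rat_of_nat (Suc t) * ((-1/2::rat) gchoose Suc t)) = fact t * ((-1/2 - of_nat t) * ((-1/2::rat) gchoose t))"
      using r by (simp only: fact_Suc mult_ac)
    then show "rat_of_nat (Suc t) * ((-1/2::rat) gchoose Suc t) = (-1/2 - of_nat t) * ((-1/2::rat) gchoose t)"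
      by (metis mult_left_cancel fact_nonzero)
  qed
  also have "\<dots> = (-1)^Suc t * (2 * (2*of_nat t+1) * C0) / 4^Suc t"
    unfolding IH by (simp add: field_simps)
  also have "\<dots> = (-1)^Suc t * (rat_of_nat (Suc t) * C1) / 4^Suc t"
    by (simp only: c)
  also have "\<dots> = rat_of_nat (Suc t) * ((-1)^Suc t * C1 / 4^Suc t)"
    by (simp only: mult_ac times_divide_eq_right)
  finally have "rat_of_nat (Suc t) * G1 = rat_of_nat (Suc t) * ((-1)^Suc t * C1 / 4^Suc t)" .
  then have "G1 = (-1)^Suc t * C1 / 4^Suc t"
    by (metis mult_left_cancel of_nat_eq_0_iff nat.distinct(1))
  then show ?case unfolding G1_def C1_def .
qed


lemma poch_diff:
  fixes a q :: int
  shows "[pochhammer (a+q) n = pochhammer a n] (mod q) \<and> [pochhammer (a-q) n = pochhammer a n] (mod q)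
         \<and> q^2 dvd pochhammer (a+q) n + pochhammer (a-q) n - 2 * pochhammer a n"
proof (induction n)
  case 0
  then show ?case by simp
next
  case (Suc n)
  define X where "X = pochhammer (a+q) n"
  define Y where "Y = pochhammer (a-q) n"
  define Z where "Z = pochhammer a n"
  define c where "c = a + of_nat n"
  have X: "[X = Z] (mod q)" and Y: "[Y = Z] (mod q)" and D: "q^2 dvd X + Y - 2*Z"
    using Suc unfolding X_def Y_def Z_def by auto
  have e1: "pochhammer (a+q) (Suc n) = (c+q) * X" unfolding X_def c_def
    by (simp add: pochhammer_rec' algebra_simps)
  have e2: "pochhammer (a-q) (Suc n) = (c-q) * Y" unfolding Y_def c_def
    by (simp add: pochhammer_rec' algebra_simps)
  have e3: "pochhammer a (Suc n) = c * Z" unfolding Z_def c_def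
    by (simp add: pochhammer_rec' algebra_simps)
  have "[(c+q)*X = c*Z] (mod q)"
  proof -
    have "[(c+q)*X = (c+0)*Z] (mod q)"
      by (intro cong_mult cong_add X) (auto simp: cong_def)
    then show ?thesis by simp
  qed
  moreover have "[(c-q)*Y = c*Z] (mod q)"
  proof -
    have "[(c-q)*Y = (c-0)*Z] (mod q)"
      by (intro cong_mult cong_diff Y) (auto simp: cong_def)
    then show ?thesis by simp
  qed
  moreover have "q^2 dvd (c+q)*X + (c-q)*Y - 2*(c*Z)"
  proof -
    have eq: "(c+q)*X + (c-q)*Y - 2*(c*Z) = c*(X+Y-2*Z) + q*(X-Y)" by (simp add: algebra_simps)
    have "q dvd X - Y" using X Y by (metis cong_iff_dvd_diff cong_sym cong_trans)
    then have "q^2 dvd q*(X-Y)" by (simp add: power2_eq_square)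
    moreover have "q^2 dvd c*(X+Y-2*Z)" using D by simp
    ultimately show ?thesis unfolding eq by simp
  qed
  ultimately show ?case unfolding e1 e2 e3 by simp
qed

lemma poch_binom:
  "pochhammer (int m + 1) n = fact n * int ((m+n) choose n)"
proof -
  have "rat_of_int (pochhammer (int m + 1) n) = pochhammer (of_nat m + 1) n"
    by (simp add: pochhammer_of_int[symmetric])
  also have "\<dots> = fact n * (of_nat (m+n) gchoose n)"
    by (simp add: gbinomial_pochhammer')
  also have "\<dots> = fact n * of_nat ((m+n) choose n)"
    by (simp add: binomial_gbinomial)
  also have "\<dots> = rat_of_int (fact n * int ((m+n) choose n))" by simp
  finally show ?thesis by (simp only: of_int_eq_iff)
qed


lemma coprime_small:
  assumes "prime p" "0 < k" "k < p"
  shows "coprime (int k) (int p)"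
proof -
  have "\<not> p dvd k" using assms by (auto dest: dvd_imp_le)
  then have "coprime p k" using assms(1) by (simp add: prime_imp_coprime)
  then show ?thesis by (simp add: coprime_commute)
qed

lemma nt_step: "Suc k * (n choose Suc k) = (n - k) * (n choose k)"
  using binomial_absorption[of k n] binomial_absorb_comp[of n k] by simp

lemma half_binom_cong:
  assumes p: "prime p" and pn: "p = 2*n+1" and "t \<le> n"
  shows "[4^t * int (n choose t) = (-1)^t * int (2*t choose t)] (mod int p)"
  using assms(3)
proof (induction t)
  case 0
  then show ?case by simp
next
  case (Suc t)
  then have IH: "[4^t * int (n choose t) = (-1)^t * int (2*t choose t)] (mod int p)" by simp
  have a: "int (Suc t) * int (n choose Suc t) = (int n - int t) * int (n choose t)"
    using arg_cong[OF nt_step[of t n], of int] Suc.prems by (simp add: of_nat_diff algebra_simps)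
  have b: "int (Suc t) * int (2 * Suc t choose Suc t) = 2 * (2 * int t + 1) * int (2*t choose t)"
    using arg_cong[OF central_step[of t], of int]
    by (simp only: of_nat_mult of_nat_add of_nat_numeral of_nat_1)
  have "int (Suc t) * (4^Suc t * int (n choose Suc t)) = 4*4^t*(int (Suc t) * int (n choose Suc t))"
    by (simp only: power_Suc mult_ac)
  also have "\<dots> = 4*4^t*((int n - int t)*int(n choose t))" by (simp only: a)
  also have "\<dots> = 4 * (int n - int t) * (4^t * int (n choose t))" by (simp only: mult_ac)
  also have "[\<dots> = 4 * (int n - int t) * ((-1)^t * int (2*t choose t))] (mod int p)"
    by (intro cong_mult IH cong_refl)
  also have "4 * (int n - int t) * ((-1)^t * int (2*t choose t)) =
      (-1)^Suc t * (2 * (2 * int t + 1) * int (2*t choose t)) + 2 * int p * ((-1)^t * int (2*t choose t))"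
    using pn by (simp add: algebra_simps)
  also have "[\<dots> = (-1)^Suc t * (2 * (2 * int t + 1) * int (2*t choose t)) + 0] (mod int p)"
    by (intro cong_add cong_refl) (simp add: cong_def)
  also have "(-1)^Suc t * (2 * (2 * int t + 1) * int (2*t choose t)) + 0 =
      int (Suc t) * ((-1)^Suc t * int (2 * Suc t choose Suc t))"
    unfolding b[symmetric] by (simp add: algebra_simps)
  finally have "[int (Suc t) * (4^Suc t * int (n choose Suc t)) = int (Suc t) * ((-1)^Suc t * int (2 * Suc t choose Suc t))] (mod int p)" .
  moreover have "coprime (int (Suc t)) (int p)"
    using coprime_small[OF p, of "Suc t"] Suc.prems pn by simp
  ultimately show ?case using cong_mult_lcancel by blast
qed


lemma term_facts:
  assumes p: "prime p" and pn: "p = 2*n+1" and t: "t \<le> n"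
  shows "[int ((p+n+t) choose (p+t)) = int ((n+t) choose t)] (mod int p)
    \<and> (int p)^2 dvd int ((p+n+t) choose (p+t)) + (-1)^n * int ((n-t+n) choose n) - 2 * int ((n+t) choose t)"
proof -
  define F :: int where "F = fact n"
  define A where "A = int ((n+t) choose t)"
  define B where "B = int ((p+n+t) choose (p+t))"
  define D where "D = int ((n-t+n) choose n)"
  have cF: "coprime F (int p)"
  proof -
    have "\<not> p dvd fact n" using p pn by (simp add: prime_dvd_fact_iff)
    then have "coprime p (fact n)" using p by (simp add: prime_imp_coprime)
    then have "coprime (int (fact n)) (int p)" by (metis coprime_commute coprime_int_iff)
    then show ?thesis unfolding F_def by (metis of_nat_fact)
  qed
  have eA: "pochhammer (int t + 1) n = F * A"
    unfolding F_def A_def using poch_binom[of t n] binomial_symmetric[of t "n+t"]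
    by (simp add: add.commute)
  have eB: "pochhammer (int t + 1 + int p) n = F * B"
  proof -
    have "pochhammer (int t + 1 + int p) n = pochhammer (int (t+p) + 1) n" by (simp add: algebra_simps)
    also have "\<dots> = F * int ((t+p+n) choose n)" unfolding F_def by (rule poch_binom)
    also have "(t+p+n) choose n = (p+n+t) choose (p+t)"
      using binomial_symmetric[of n "p+n+t"] by (simp add: add.commute add.left_commute)
    finally show ?thesis unfolding B_def .
  qed
  have eD: "pochhammer (int t + 1 - int p) n = (-1)^n * (F * D)"
  proof -
    have "int t + 1 - int p = - int (2*n - t)" using pn t by simp
    then have "pochhammer (int t + 1 - int p) n = (-1)^n * pochhammer (int (2*n-t) - int n + 1) n"
      by (simp add: pochhammer_minus)
    also have "int (2*n-t) - int n + 1 = int (n-t) + 1" using t by simp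
    also have "pochhammer (int (n-t) + 1) n = F * D" unfolding F_def D_def by (rule poch_binom)
    finally show ?thesis .
  qed
  note pd = poch_diff[of "int t + 1" "int p" n]
  have c1: "[F * B = F * A] (mod int p)" using pd eA eB by simp
  have c2: "(int p)^2 dvd F * (B + (-1)^n * D - 2 * A)"
  proof -
    have "F * (B + (-1)^n * D - 2 * A) = F*B + (-1)^n*(F*D) - 2*(F*A)" by (simp add: algebra_simps)
    then show ?thesis using pd eA eB eD by simp
  qed
  have "[B = A] (mod int p)" using c1 cF cong_mult_lcancel by blast
  moreover have "(int p)^2 dvd B + (-1)^n * D - 2 * A"
  proof -
    have "coprime F ((int p)^2)" using cF by simp
    then show ?thesis using c2 coprime_dvd_mult_right_iff[of "(int p)^2" F] coprime_commute
      by (metis coprime_dvd_mult_right_iff)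
  qed
  ultimately show ?thesis unfolding A_def B_def D_def by simp
qed


lemma main_dvd:
  assumes p: "prime p" and pn: "p = 2*n+1"
  shows "(int p)^2 dvd (\<Sum>t=0..n. (-1)^t * (int ((n+t) choose t) - int ((p+n+t) choose (p+t)))
            * (int (2*t choose t)^2 * 16^(n-t)))"
proof -
  define A where "A = (\<lambda>t. int ((n+t) choose t))"
  define B where "B = (\<lambda>t. int ((p+n+t) choose (p+t)))"
  define D where "D = (\<lambda>t. int ((n-t+n) choose n))"
  define c where "c = (\<lambda>t. int (n choose t))"
  define w where "w = (\<lambda>t. int (2*t choose t)^2 * (16::int)^(n-t))"
  define K :: int where "K = 16^n"
  define f where "f = (\<lambda>t. (-1)^t * (A t - B t) * w t)"
  define g where "g = (\<lambda>t. (-1)^t * ((-1)^n * D t - A t) * (K * c t^2))"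
  have sg: "(\<Sum>t=0..n. g t) = 0"
  proof -
    have "(\<Sum>t=0..n. (-1)^t * D t * c t^2) = (\<Sum>t=0..n. (-1)^(n-t) * D (n-t) * c (n-t)^2)"
      using sum.atLeastAtMost_rev[of "\<lambda>t. (-1)^t * D t * c t^2" 0 n] by simp
    also have "\<dots> = (\<Sum>t=0..n. (-1)^n * ((-1)^t * A t * c t^2))"
    proof (rule sum.cong)
      fix t assume "t \<in> {0..n}"
      then have tn: "t \<le> n" by simp
      have "D (n-t) = A t" unfolding D_def A_def using tn binomial_symmetric[of t "n+t"]
        by (simp add: add.commute)
      moreover have "c (n-t) = c t" unfolding c_def using tn binomial_symmetric[of t n] by simp
      moreover have "((-1)::int)^(n-t) = (-1)^n * (-1)^t"
      proof -
        have "((-1)::int)^n = (-1)^(n-t) * (-1)^t" using tn by (simp add: power_add[symmetric])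
        then show ?thesis by (simp add: algebra_simps)
      qed
      ultimately show "(-1)^(n-t) * D (n-t) * c (n-t)^2 = (-1)^n * ((-1)^t * A t * c t^2)" by simp
    qed simp
    finally have e: "(\<Sum>t=0..n. (-1)^t * D t * c t^2) = (-1)^n * (\<Sum>t=0..n. (-1)^t * A t * c t^2)"
      by (simp add: sum_distrib_left)
    have "(\<Sum>t=0..n. g t) = K * ((-1)^n * (\<Sum>t=0..n. (-1)^t * D t * c t^2) - (\<Sum>t=0..n. (-1)^t * A t * c t^2))"
      unfolding g_def by (simp add: sum_distrib_left sum_subtractf algebra_simps)
    also have "\<dots> = 0" unfolding e by simp
    finally show ?thesis .
  qed
  have dfg: "(int p)^2 dvd f t - g t" if tn: "t \<le> n" for t
  proof -
    note tf = term_facts[OF p pn tn]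
    have pAB: "int p dvd A t - B t" using tf unfolding A_def B_def
      by (metis cong_iff_dvd_diff cong_sym)
    have pw: "int p dvd w t - K * c t^2"
    proof -
      have h: "[4^t * c t = (-1)^t * int (2*t choose t)] (mod int p)"
        unfolding c_def by (rule half_binom_cong[OF p pn tn])
      have "[(4^t * c t)^2 = ((-1)^t * int (2*t choose t))^2] (mod int p)"
        by (rule cong_pow[OF h])
      have h16: "(4::int)^(t*2) = 16^t"
      proof -
        have "(4::int)^(t*2) = (4^2)^t" by (metis mult.commute power_mult)
        then show ?thesis by simp
      qed
      from this[symmetric] \<open>[(4^t * c t)^2 = ((-1)^t * int (2*t choose t))^2] (mod int p)\<close>
      have "[16^t * c t^2 = int (2*t choose t)^2] (mod int p)"
        by (simp add: h16 power_mult_distrib power_even_eq[symmetric] power_mult[symmetric] mult.commute)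
      then have "[16^(n-t) * (16^t * c t^2) = 16^(n-t) * int (2*t choose t)^2] (mod int p)"
        by (rule cong_scalar_left)
      moreover have "16^(n-t) * (16^t * c t^2) = K * c t^2"
        unfolding K_def using tn by (simp add: power_add[symmetric])
      ultimately have X: "[K * c t^2 = 16^(n-t) * int (2*t choose t)^2] (mod int p)" by metis
      have "w t = 16^(n-t) * int (2*t choose t)^2" unfolding w_def by (simp only: mult.commute)
      with X have "[K * c t^2 = w t] (mod int p)" by simp
      then show ?thesis by (metis cong_iff_dvd_diff cong_sym)
    qed
    have p2: "(int p)^2 dvd B t + (-1)^n * D t - 2 * A t" using tf unfolding A_def B_def D_def by simp
    have eq: "f t - g t = (-1)^t * ((A t - B t) * (w t - K * c t^2) - (B t + (-1)^n * D t - 2 * A t) * (K * c t^2))"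
      unfolding f_def g_def by (simp add: algebra_simps)
    have "(int p)^2 dvd (A t - B t) * (w t - K * c t^2)"
      using mult_dvd_mono[OF pAB pw] by (simp add: power2_eq_square)
    moreover have "(int p)^2 dvd (B t + (-1)^n * D t - 2 * A t) * (K * c t^2)"
      using p2 by simp
    ultimately show ?thesis unfolding eq by (rule dvd_mult[OF dvd_diff])
  qed
  have "(\<Sum>t=0..n. f t) = (\<Sum>t=0..n. f t - g t) + (\<Sum>t=0..n. g t)"
    by (simp add: sum_subtractf)
  also have "\<dots> = (\<Sum>t=0..n. f t - g t)" using sg by simp
  finally have "(\<Sum>t=0..n. f t) = (\<Sum>t=0..n. f t - g t)" .
  moreover have "(int p)^2 dvd (\<Sum>t=0..n. f t - g t)"
    by (rule dvd_sum) (use dfg in auto)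
  ultimately show ?thesis unfolding f_def A_def B_def w_def by simp
qed


lemma den_coprime:
  fixes M d q :: int
  assumes "d > 0" "coprime d q"
  shows "coprime (snd (quotient_of (of_int M / of_int d))) q"
proof -
  obtain a b where ab: "quotient_of (of_int M / of_int d) = (a, b)" by (cases "quotient_of (of_int M / of_int d)")
  have b0: "b > 0" using ab by (rule quotient_of_denom_pos)
  have cab: "coprime a b" using ab by (rule quotient_of_coprime)
  have "(of_int M / of_int d :: rat) = of_int a / of_int b" using ab by (rule quotient_of_div)
  then have "rat_of_int (a * d) = rat_of_int (M * b)" using b0 assms(1)
    by (simp add: field_simps)
  then have e: "a * d = M * b" by (simp only: of_int_eq_iff)
  have "b dvd a * d" unfolding e by simp
  then have "b dvd d" using cab by (simp add: coprime_dvd_mult_right_iff coprime_commute)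
  then have "coprime b q" using assms(2) by (meson coprime_divisors dvd_refl)
  then show ?thesis using ab by simp
qed

theorem lemma2p16:
  fixes p :: nat
  assumes "prime p" and "odd p"
  shows "rat_cong_pow
     (\<Sum>t = 0..(p - 1) div 2.
        (-1) ^ t *
        ((of_nat ((p - 1) div 2 + t) gchoose t)
          - (of_nat (p + (p - 1) div 2 + t) gchoose (p + t)))
        * ((-1/2 :: rat) gchoose t) ^ 2)
     0 p 2"
proof -
  define n where "n = (p - 1) div 2"
  have pn: "p = 2*n+1" using assms(2) unfolding n_def by (auto elim!: oddE)
  define T where "T = (\<Sum>t=0..n. (-1)^t * (int ((n+t) choose t) - int ((p+n+t) choose (p+t)))
            * (int (2*t choose t)^2 * 16^(n-t)))"
  have dv: "(int p)^2 dvd T" unfolding T_def by (rule main_dvd[OF assms(1) pn])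
  then obtain M where M: "T = (int p)^2 * M" by blast
  have S: "(\<Sum>t = 0..n. (-1) ^ t * ((of_nat (n + t) gchoose t) - (of_nat (p + n + t) gchoose (p + t)))
        * ((-1/2 :: rat) gchoose t) ^ 2) = of_int T / 16^n"
  proof -
    have "(\<Sum>t = 0..n. (-1) ^ t * ((of_nat (n + t) gchoose t) - (of_nat (p + n + t) gchoose (p + t)))
        * ((-1/2 :: rat) gchoose t) ^ 2) = (\<Sum>t = 0..n. of_int ((-1)^t * (int ((n+t) choose t) - int ((p+n+t) choose (p+t)))
            * (int (2*t choose t)^2 * 16^(n-t))) / 16^n)"
    proof (rule sum.cong)
      fix t assume "t \<in> {0..n}"
      then have tn: "t \<le> n" by simp
      have h16: "(4::rat)^(t*2) = 16^t"
      proof -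
        have "(4::rat)^(t*2) = (4^2)^t" by (metis mult.commute power_mult)
        then show ?thesis by simp
      qed
      have g2: "((-1/2 :: rat) gchoose t) ^ 2 = of_nat (2*t choose t)^2 / 16^t"
        unfolding gb_half using h16 by (simp add: power_mult_distrib power_divide power_even_eq[symmetric] power_mult[symmetric])
      have h: "(16::rat)^(n-t) / 16^n = 1 / 16^t"
        using tn by (simp add: power_add[symmetric] field_simps)
      show "(-1) ^ t * ((of_nat (n + t) gchoose t) - (of_nat (p + n + t) gchoose (p + t)))
        * ((-1/2 :: rat) gchoose t) ^ 2 = of_int ((-1)^t * (int ((n+t) choose t) - int ((p+n+t) choose (p+t)))
            * (int (2*t choose t)^2 * 16^(n-t))) / 16^n"
        unfolding g2 binomial_gbinomial[symmetric]
        using h by (simp add: field_simps)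
    qed simp
    also have "\<dots> = of_int T / 16^n" unfolding T_def by (simp add: sum_divide_distrib)
    finally show ?thesis .
  qed
  have "(of_int T / 16^n - 0) / of_nat (p^2) = (of_int M / of_int (16^n) :: rat)"
    unfolding M using assms(1) by (simp add: prime_gt_0_nat)
  moreover have "coprime (16::int) (int p)"
  proof -
    have "coprime (2::int) (int p)" using assms(2) by simp
    then have "coprime ((2::int)^4) (int p)" by (metis coprime_power_left_iff)
    moreover have "(2::int)^4 = 16" by simp
    ultimately show ?thesis by metis
  qed
  ultimately show ?thesis unfolding rat_cong_pow_def n_def[symmetric] S
    using den_coprime[of "16^n" "int p" M] by simp
qed

end
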